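(* Let $E$ be an $\mathbb{R}$-group, $X$ a locally compact (Hausdorff) space not reduced to one point, and $\mathcal{H}=(H_\varepsilon)_{\varepsilon\in E}$ a continuous absorptive action of $E$ on $X$ with center $\omega$. Then for every $x\in X$ with $x\neq\omega$, $H_\varepsilon(x)\to\infty$ as $\varepsilon\to\theta$, where $\infty$ is the point at infinity of the Alexandroff compactification of $X$; i.e., for every compact $K\subset X$ there exists $\alpha\in E$ such that $H_\varepsilon(x)\notin K$ for all $\varepsilon\in E$ with $\varepsilon\le\alpha$.
   Context: An $\mathbb{R}$-group is an abelian group $E$ (operation written multiplicatively) whose underlying set is a subset of $\mathbb{R}$ containing all positive integers, such that: (RG1) with the natural order of $\mathbb{R}$, $E$ is a totally ordered group; (RG2) with the topology induced from $\mathbb{R}$, $E$ is a locally compact group; (RG3) there is a nonconstant continuous homomorphism $h:E\to\mathbb{R}_+^*$ such that for every $\alpha\in E$ the set $\{\varepsilon\in E:\varepsilon\ge\alpha\}$ is integrable for $h\cdot m$, $m$ a Haar measure on $E$. $e$ is the identity of $E$, $\varepsilon^{-1}$ the group inverse, $\theta=\inf E\in\mathbb{R}\cup\{\pm\infty\}$; inequalities refer to the order of $\mathbb{R}$. An action of $E$ on $X$ is a family $(H_\varepsilon)_{\varepsilon\in E}$ of bijections of $X$ with $H_\varepsilon\circ H_{\varepsilon'}=H_{\varepsilon\varepsilon'}$, $H_e=\mathrm{id}_X$; continuous if $(\varepsilon,x)\mapsto H_\varepsilon(x)$ is continuous on $E\times X$; absorptive if some $\omega\in X$ satisfies (ABS):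 for every neighbourhood $V$ of $\omega$ and every $x\in X$ there are a neighbourhood $U$ of $x$ and $\alpha\in E$ with $H_{\varepsilon^{-1}}(U)\subset V$ for all $\varepsilon\le\alpha$. For a continuous absorptive action this $\omega$ is unique and called the center. *)

theory Defs
  imports "HOL-Analysis.Analysis"
begin

definition abelian_group_on :: "real set \<Rightarrow> (real \<Rightarrow> real \<Rightarrow> real) \<Rightarrow> real \<Rightarrow> (real \<Rightarrow> real) \<Rightarrow> bool" where
  "abelian_group_on E mul e ginv \<longleftrightarrow>
     e \<in> E \<and>
     (\<forall>a\<in>E. \<forall>b\<in>E. mul a b \<in> E) \<and>
     (\<forall>a\<in>E. ginv a \<in> E) \<and>
     (\<forall>a\<in>E. \<forall>b\<in>E. \<forall>c\<in>E. mul (mul a b) c = mul a (mul b c)) \<and>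
     (\<forall>a\<in>E. \<forall>b\<in>E. mul a b = mul b a) \<and>
     (\<forall>a\<in>E. mul e a = a) \<and>
     (\<forall>a\<in>E. mul (ginv a) a = e)"

text \<open>Haar measure on the locally compact group E (a subspace of the real line):
  a nonzero Borel measure on E, invariant under translations and finite on compact
  sets (regularity is automatic for such measures on second countable locally
  compact spaces).\<close>
definition Haar_measure :: "real set \<Rightarrow> (real \<Rightarrow> real \<Rightarrow> real) \<Rightarrow> real measure \<Rightarrow> bool" where
  "Haar_measure E mul m \<longleftrightarrow>
     space m = E \<and> sets m = sets (restrict_space borel E) \<and>
     emeasure m E \<noteq> 0 \<and>
     (\<forall>K. K \<subseteq> E \<and> compact K \<longrightarrow> emeasure m K < \<infinity>) \<and>
     (\<forall>g\<in>E. \<forall>A\<in>sets m. emeasure m ((\<lambda>x. mul g x) ` A) = emeasure m A)"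

definition R_group :: "real set \<Rightarrow> (real \<Rightarrow> real \<Rightarrow> real) \<Rightarrow> real \<Rightarrow> (real \<Rightarrow> real) \<Rightarrow> bool" where
  "R_group E mul e ginv \<longleftrightarrow>
     abelian_group_on E mul e ginv \<and>
     (\<forall>n::nat. n \<ge> 1 \<longrightarrow> real n \<in> E) \<and>
     \<comment> \<open>(RG1) totally ordered group for the natural order of the reals\<close>
     (\<forall>a\<in>E. \<forall>b\<in>E. \<forall>c\<in>E. a \<le> b \<longrightarrow> mul a c \<le> mul b c) \<and>
     \<comment> \<open>(RG2) locally compact topological group for the induced topology\<close>
     continuous_on (E \<times> E) (\<lambda>(a, b). mul a b) \<and>
     continuous_on E ginv \<and>
     locally compact E \<and>
     \<comment> \<open>(RG3)\<close>
     (\<exists>h :: real \<Rightarrow> real.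
        (\<forall>a\<in>E. h a > 0) \<and> continuous_on E h \<and>
        (\<forall>a\<in>E. \<forall>b\<in>E. h (mul a b) = h a * h b) \<and>
        (\<exists>a\<in>E. \<exists>b\<in>E. h a \<noteq> h b) \<and>
        (\<exists>m. Haar_measure E mul m \<and>
           (\<forall>\<alpha>\<in>E. emeasure (density m (\<lambda>x. ennreal (h x))) {\<epsilon>\<in>E. \<alpha> \<le> \<epsilon>} < \<infinity>)))"

definition action_on :: "real set \<Rightarrow> (real \<Rightarrow> real \<Rightarrow> real) \<Rightarrow> real \<Rightarrow> (real \<Rightarrow> 'a \<Rightarrow> 'a) \<Rightarrow> bool" where
  "action_on E mul e H \<longleftrightarrow>
     (\<forall>\<epsilon>\<in>E. bij (H \<epsilon>)) \<and>
     (\<forall>a\<in>E. \<forall>b\<in>E. H a \<circ> H b = H (mul a b)) \<and>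
     H e = id"

definition continuous_action :: "real set \<Rightarrow> (real \<Rightarrow> 'a::topological_space \<Rightarrow> 'a) \<Rightarrow> bool" where
  "continuous_action E H \<longleftrightarrow> continuous_on (E \<times> UNIV) (\<lambda>(\<epsilon>, x). H \<epsilon> x)"

text \<open>Condition (ABS) for the point \<omega> (neighbourhoods may be taken open).\<close>
definition ABS :: "real set \<Rightarrow> (real \<Rightarrow> real) \<Rightarrow> (real \<Rightarrow> 'a::topological_space \<Rightarrow> 'a) \<Rightarrow> 'a \<Rightarrow> bool" where
  "ABS E ginv H \<omega> \<longleftrightarrow>
     (\<forall>V. open V \<and> \<omega> \<in> V \<longrightarrow>
        (\<forall>x. \<exists>U. open U \<and> x \<in> U \<and>
              (\<exists>\<alpha>\<in>E. \<forall>\<epsilon>\<in>E. \<epsilon> \<le> \<alpha> \<longrightarrow> H (ginv \<epsilon>) ` U \<subseteq> V)))"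

end

theory Submission
  imports Defs
begin

theorem corollary2p2:
  fixes E :: "real set" and mul :: "real \<Rightarrow> real \<Rightarrow> real" and e :: real
    and ginv :: "real \<Rightarrow> real" and H :: "real \<Rightarrow> 'a::t2_space \<Rightarrow> 'a" and \<omega> :: 'a
  assumes "R_group E mul e ginv"
    and "locally compact (UNIV :: 'a set)"
    and "\<exists>y z :: 'a. y \<noteq> z"
    and "action_on E mul e H"
    and "continuous_action E H"
    and "ABS E ginv H \<omega>"
  shows "\<forall>x. x \<noteq> \<omega> \<longrightarrow>
           (\<forall>K. compact K \<longrightarrow> (\<exists>\<alpha>\<in>E. \<forall>\<epsilon>\<in>E. \<epsilon> \<le> \<alpha> \<longrightarrow> H \<epsilon> x \<notin> K))"
proof (intro allI impI)
  fix x and K :: "'a set" assume xw: "x \<noteq> \<omega>" and K: "compact K"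
  have grp: "abelian_group_on E mul e ginv" using assms(1) unfolding R_group_def by blast
  hence eE: "e \<in> E" and ginvE: "\<forall>a\<in>E. ginv a \<in> E" and inv: "\<forall>a\<in>E. mul (ginv a) a = e"
    unfolding abelian_group_on_def by auto
  have act: "\<forall>a\<in>E. \<forall>b\<in>E. H a \<circ> H b = H (mul a b)" "H e = id"
    using assms(4) unfolding action_on_def by auto
  obtain V where V: "open V" "\<omega> \<in> V" "x \<notin> V"
    using separation_t2[of x \<omega>] xw by blast
  have "\<forall>y. \<exists>U. open U \<and> y \<in> U \<and> (\<exists>\<alpha>\<in>E. \<forall>\<epsilon>\<in>E. \<epsilon> \<le> \<alpha> \<longrightarrow> H (ginv \<epsilon>) ` U \<subseteq> V)"
    using assms(6) V unfolding ABS_def by blast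
  then obtain U a where U: "\<And>y. open (U y)" "\<And>y. y \<in> U y" "\<And>y. a y \<in> E"
    "\<And>y \<epsilon>. \<epsilon> \<in> E \<Longrightarrow> \<epsilon> \<le> a y \<Longrightarrow> H (ginv \<epsilon>) ` U y \<subseteq> V"
    by metis
  have key: "H \<epsilon> x \<notin> U y" if "\<epsilon> \<in> E" "\<epsilon> \<le> a y" for \<epsilon> y
  proof
    assume "H \<epsilon> x \<in> U y"
    hence "H (ginv \<epsilon>) (H \<epsilon> x) \<in> V" using U(4)[OF that] by blast
    moreover have "H (ginv \<epsilon>) (H \<epsilon> x) = x"
      proof -
      have "H (ginv \<epsilon>) (H \<epsilon> x) = (H (ginv \<epsilon>) \<circ> H \<epsilon>) x" by simp
      also have "\<dots> = H (mul (ginv \<epsilon>) \<epsilon>) x" using act(1) ginvE that(1) by metis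
      also have "\<dots> = x" using inv that(1) act(2) by simp
      finally show ?thesis .
    qed
    ultimately show False using V by simp
  qed
  obtain T :: "'a set" where T: "T \<subseteq> K" "finite T" "K \<subseteq> (\<Union>y\<in>T. U y)"
    proof (rule compactE_image[OF K, of K U])
    show "open (U y)" for y by (rule U(1))
    show "K \<subseteq> (\<Union>y\<in>K. U y)" using U(2) by blast
  qed auto
  show "\<exists>\<alpha>\<in>E. \<forall>\<epsilon>\<in>E. \<epsilon> \<le> \<alpha> \<longrightarrow> H \<epsilon> x \<notin> K"
  proof (cases "T = {}")
    case True
    then show ?thesis using T eE by auto
  next
    case False
    have mE: "Min (a ` T) \<in> E" using False T(2) U(3)
      proof -
      have "Min (a ` T) \<in> a ` T" using False T(2) by simp
      thus ?thesis using U(3) by auto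
    qed
    show ?thesis
    proof (intro bexI[OF _ mE] ballI impI)
      fix \<epsilon> assume "\<epsilon> \<in> E" "\<epsilon> \<le> Min (a ` T)"
      hence "\<epsilon> \<le> a y" if "y \<in> T" for y proof -
        have "Min (a ` T) \<le> a y" using that T(2) by simp
        thus ?thesis using \<open>\<epsilon> \<le> Min (a ` T)\<close> by linarith
      qed
      thus "H \<epsilon> x \<notin> K" using key \<open>\<epsilon> \<in> E\<close> T(3) by blast
    qed
  qed
qed

end
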